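(* Let $\mu$ be a Borel probability measure on $\mathbb{R}^{n+d}$ for some $n\in\mathbb{N}$ and $d\in\mathbb{N}^+$. Then $$\dim_P\mu=\sup\Big\{\gamma:\ \liminf_{r\to0+} r^{-\gamma}G_d^\mu(x,r)=0 \text{ for } \mu\text{-a.e. } x\in\mathbb{R}^{n+d}\Big\}.$$
   Context: $\mathbb{R}^0=\{0\}$. $\dim_P\mu=\inf\{\dim_P E: E\subset\mathbb{R}^{n+d}\text{ Borel}, \mu(E)>0\}$, where $\dim_P E$ is packing dimension. $D(u,r)$ denotes the closed ball of radius $r$ about $u$ in the maximum norm $\|x\|=\max_i|x_i|$. For $x\in\mathbb{R}^d$, $I_d(x)=\prod_{i=1}^d\min\{1,|x_i|^{-1}\}$ with the convention $\min\{1,0^{-1}\}=1$. For $x=(u,v)\in\mathbb{R}^n\times\mathbb{R}^d$ and $r>0$, $\mu_{u,r}$ is the Borel measure on $\mathbb{R}^d$ given by $\mu_{u,r}(E)=\mu(D(u,r)\times E)$, and $$G_d^\mu(x,r)=\int_{\mathbb{R}^d} I_d\Big(\frac{y-v}{r}\Big)\,d\mu_{u,r}(y).$$ *)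

theory Defs
  imports "HOL-Probability.Probability"
begin

definition cover_num :: "'a::metric_space set \<Rightarrow> real \<Rightarrow> nat" where
  "cover_num F \<delta> = (LEAST k. \<exists>C. finite C \<and> card C = k \<and> F \<subseteq> (\<Union>c\<in>C. cball c \<delta>))"

definition upper_box_dim :: "'a::metric_space set \<Rightarrow> ereal" where
  "upper_box_dim F =
     (if F = {} then 0
      else if bounded F then
        Limsup (at_right 0) (\<lambda>\<delta>. ereal (ln (real (cover_num F \<delta>)) / - ln \<delta>))
      else \<infinity>)"

text \<open>Packing dimension as modified upper box dimension.\<close>
definition packing_dim :: "'a::metric_space set \<Rightarrow> ereal" where
  "packing_dim E = (INF F\<in>{F :: nat \<Rightarrow> 'a set. E \<subseteq> (\<Union>i. F i)}. SUP i. upper_box_dim (F i))"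

definition packing_dim_measure :: "'a::metric_space measure \<Rightarrow> ereal" where
  "packing_dim_measure \<mu> = (INF E\<in>{E. E \<in> sets borel \<and> measure \<mu> E > 0}. packing_dim E)"

definition Ifac :: "real \<Rightarrow> real" where
  "Ifac t = (if t = 0 then 1 else min 1 (1 / \<bar>t\<bar>))"

text \<open>R^{n+d} is real^'m; the index set U holds the n u-coordinates, its complement
  the d v-coordinates. G(x,r) = integral of I_d((y-v)/r) d mu_{u,r}(y), written out as an
  integral of mu over the slab D(u,r) x R^d.\<close>
definition Gfun :: "'m set \<Rightarrow> (real^'m::finite) measure \<Rightarrow> real^'m \<Rightarrow> real \<Rightarrow> ennreal" where
  "Gfun U \<mu> x r =
     (\<integral>\<^sup>+ z. indicator {z. \<forall>i\<in>U. \<bar>z$i - x$i\<bar> \<le> r} z *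
              ennreal (\<Prod>i\<in>-U. Ifac ((z$i - x$i) / r)) \<partial>\<mu>)"

end

theory Submission
  imports Defs "HOL-Real_Asymp.Real_Asymp"
begin


definition Dbox :: "real^'m::finite \<Rightarrow> real \<Rightarrow> (real^'m) set" where
  "Dbox x r = {z. \<forall>i. \<bar>z$i - x$i\<bar> \<le> r}"

lemma Ifac_nonneg: "0 \<le> Ifac t" by (simp add: Ifac_def)
lemma Ifac_le1: "Ifac t \<le> 1" by (simp add: Ifac_def)
lemma Ifac_one: "\<bar>t\<bar> \<le> 1 \<Longrightarrow> Ifac t = 1"
  by (auto simp: Ifac_def min_def field_simps)
lemma Ifac_le_inv: "t \<noteq> 0 \<Longrightarrow> Ifac t \<le> 1 / \<bar>t\<bar>"
  by (simp add: Ifac_def)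

lemma closed_Dbox: "closed (Dbox (x::real^'m::finite) r)"
proof -
  have "Dbox x r = (\<Inter>i. {z. \<bar>z$i - x$i\<bar> \<le> r})" by (auto simp: Dbox_def)
  moreover have "closed {z::real^'m. \<bar>z$i - x$i\<bar> \<le> r}" for i
    by (intro closed_Collect_le continuous_intros)
  ultimately show ?thesis by auto
qed

lemma Dbox_borel[measurable]: "Dbox x r \<in> sets borel"
  using closed_Dbox by (rule borel_closed)

lemma Ifac_measurable[measurable]: "Ifac \<in> borel_measurable borel"
  unfolding Ifac_def[abs_def] by measurable

lemma Gfun_integrand_measurable:
  fixes x :: "real^'m::finite"
  shows "(\<lambda>z. indicator {z. \<forall>i\<in>U. \<bar>z$i - x$i\<bar> \<le> r} z *
              ennreal (\<Prod>i\<in>-U. Ifac ((z$i - x$i) / r))) \<in> borel_measurable borel"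
proof -
  have "{z::real^'m. \<forall>i\<in>U. \<bar>z$i - x$i\<bar> \<le> r} = (\<Inter>i\<in>U. {z. \<bar>z$i - x$i\<bar> \<le> r}) "
    by auto
  moreover have "closed {z::real^'m. \<bar>z$i - x$i\<bar> \<le> r}" for i
    by (intro closed_Collect_le continuous_intros)
  ultimately have "closed {z::real^'m. \<forall>i\<in>U. \<bar>z$i - x$i\<bar> \<le> r}" by auto
  then have [measurable]: "{z::real^'m. \<forall>i\<in>U. \<bar>z$i - x$i\<bar> \<le> r} \<in> sets borel" by (rule borel_closed)
  show ?thesis by measurable
qed

lemma emeasure_Dbox_le_Gfun:
  fixes \<mu> :: "(real^'m::finite) measure"
  assumes "sets \<mu> = sets borel" "r > 0"
  shows "emeasure \<mu> (Dbox x r) \<le> Gfun U \<mu> x r"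
proof -
  have "emeasure \<mu> (Dbox x r) = (\<integral>\<^sup>+ z. indicator (Dbox x r) z \<partial>\<mu>)"
    using assms by (simp add: sets_eq_imp_space_eq)
  also have "\<dots> \<le> Gfun U \<mu> x r"
    unfolding Gfun_def
  proof (rule nn_integral_mono)
    fix z assume "z \<in> space \<mu>"
    show "indicator (Dbox x r) z \<le> indicator {z. \<forall>i\<in>U. \<bar>z$i - x$i\<bar> \<le> r} z *
              ennreal (\<Prod>i\<in>-U. Ifac ((z$i - x$i) / r))"
    proof (cases "z \<in> Dbox x r")
      case True
      then have "\<forall>i. \<bar>z$i - x$i\<bar> \<le> r" by (simp add: Dbox_def)
      then have "Ifac ((z$i - x$i) / r) = 1" for i
        using assms(2) by (intro Ifac_one) (simp add: abs_divide divide_le_eq_1)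
      with True show ?thesis using \<open>\<forall>i. \<bar>z$i - x$i\<bar> \<le> r\<close> by (simp add: Dbox_def indicator_def)
    qed simp
  qed
  finally show ?thesis .
qed


lemma cover_exists:
  fixes F :: "'a::euclidean_space set"
  assumes "bounded F" "\<delta> > 0"
  shows "\<exists>C. finite C \<and> F \<subseteq> (\<Union>c\<in>C. cball c \<delta>)"
proof -
  obtain R x0 where R: "F \<subseteq> cball x0 R" using assms(1) unfolding bounded_subset_cball by blast
  have cov: "cball (x0::'a) R \<subseteq> (\<Union>c\<in>cball x0 R. ball c \<delta>)"
  proof
    fix x assume "x \<in> cball (x0::'a) R"
    moreover have "x \<in> ball x \<delta>" using assms(2) by simp
    ultimately show "x \<in> (\<Union>c\<in>cball x0 R. ball c \<delta>)" by blast
  qed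
  have "\<exists>C. C \<subseteq> cball x0 R \<and> finite C \<and> cball (x0::'a) R \<subseteq> (\<Union>c\<in>C. ball c \<delta>)"
    by (rule compactE_image[where S="cball x0 R" and C="cball x0 R" and f="\<lambda>c. ball c \<delta>"])
      (use cov in auto)
  then obtain C where C: "C \<subseteq> cball x0 R" "finite C" "cball (x0::'a) R \<subseteq> (\<Union>c\<in>C. ball c \<delta>)"
    by blast
  have "F \<subseteq> (\<Union>c\<in>C. cball c \<delta>)"
    using R C(3) ball_subset_cball by blast
  then show ?thesis using C(2) by blast
qed

lemma cover_num_cover:
  fixes F :: "'a::euclidean_space set"
  assumes "bounded F" "\<delta> > 0"
  shows "\<exists>C. finite C \<and> card C = cover_num F \<delta> \<and> F \<subseteq> (\<Union>c\<in>C. cball c \<delta>)"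
proof -
  from cover_exists[OF assms] obtain C where "finite C \<and> F \<subseteq> (\<Union>c\<in>C. cball c \<delta>)" by blast
  then have "\<exists>k C. finite C \<and> card C = k \<and> F \<subseteq> (\<Union>c\<in>C. cball c \<delta>)" by blast
  from LeastI_ex[OF this] show ?thesis unfolding cover_num_def by blast
qed

lemma cover_num_le:
  assumes "finite C" "F \<subseteq> (\<Union>c\<in>C. cball c \<delta>)"
  shows "cover_num F \<delta> \<le> card C"
  unfolding cover_num_def using assms by (intro Least_le) blast

lemma cover_num_pos:
  fixes F :: "'a::euclidean_space set"
  assumes "bounded F" "\<delta> > 0" "F \<noteq> {}"
  shows "cover_num F \<delta> \<ge> 1"
proof -
  from cover_num_cover[OF assms(1,2)] obtain C where
    C: "finite C" "card C = cover_num F \<delta>" "F \<subseteq> (\<Union>c\<in>C. cball c \<delta>)" by blast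
  then have "C \<noteq> {}" using assms(3) by auto
  then show ?thesis using C by (metis One_nat_def Suc_leI card_gt_0_iff)
qed



lemma dyadic_find:
  fixes r :: real
  assumes "0 < r" "r < (1/2)^n"
  shows "\<exists>k\<ge>n. (1/2)^(k+1) < r \<and> r \<le> (1/2)^k"
proof -
  obtain j where j: "(1/2::real)^j < r" using real_arch_pow_inv[OF assms(1), of "1/2"] by auto
  define K where "K = {k. r \<le> (1/2::real)^k}"
  have "K \<subseteq> {..<j}"
  proof
    fix k assume "k \<in> K"
    then have "r \<le> (1/2::real)^k" by (simp add: K_def)
    show "k \<in> {..<j}"
    proof (rule ccontr)
      assume "k \<notin> {..<j}"
      then have "j \<le> k" by simp
      then have "(1/2::real)^k \<le> (1/2)^j" by (intro power_decreasing) auto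
      with j \<open>r \<le> _\<close> show False by simp
    qed
  qed
  then have fin: "finite K" using finite_lessThan finite_subset by blast
  have nK: "n \<in> K" using assms by (simp add: K_def)
  define k where "k = Max K"
  have kK: "k \<in> K" unfolding k_def using fin nK by (intro Max_in) auto
  have kn: "n \<le> k" unfolding k_def using fin nK by (rule Max_ge)
  have "k + 1 \<notin> K"
  proof
    assume "k + 1 \<in> K"
    then have "k + 1 \<le> k" unfolding k_def using fin by (intro Max_ge) auto
    then show False by simp
  qed
  then show ?thesis using kK kn by (intro exI[of _ k]) (simp add: K_def)
qed

lemma powr_dyadic:
  fixes r g :: real
  assumes "(1/2)^(k+1) < r" "r \<le> (1/2)^k"
  shows "r powr g \<le> 2 powr \<bar>g\<bar> * ((1/2)^k) powr g"
proof (cases "g \<ge> 0")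
  case True
  have "0 < (1/2::real)^(k+1)" by simp
  then have pos: "0 < r" using assms(1) by linarith
  have "r powr g \<le> ((1/2)^k) powr g" using True pos assms(2) by (intro powr_mono2) auto
  also have "\<dots> \<le> 2 powr \<bar>g\<bar> * ((1/2)^k) powr g"
  proof -
    have "1 \<le> (2::real) powr \<bar>g\<bar>" by (rule ge_one_powr_ge_zero) auto
    moreover have "0 \<le> ((1/2::real)^k) powr g" by simp
    ultimately show ?thesis by (metis mult_le_cancel_right1 mult.commute not_le)
  qed
  finally show ?thesis by simp
next
  case False
  have "r powr g \<le> ((1/2)^(k+1)) powr g" using False assms(1) by (intro powr_mono2') auto
  also have "((1/2::real)^(k+1)) = (1/2)^k / 2" by simp
  also have "((1/2::real)^k / 2) powr g = ((1/2)^k) powr g / 2 powr g" by (rule powr_divide)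
  also have "\<dots> = 2 powr \<bar>g\<bar> * ((1/2)^k) powr g"
  proof -
    have "\<bar>g\<bar> = - g" using False by simp
    then have "(2::real) powr \<bar>g\<bar> = 1 / 2 powr g" by (simp add: powr_minus_divide)
    then show ?thesis by simp
  qed
  finally show ?thesis .
qed

lemma half_pow_powr: "((1/2::real)^k) powr a = (2 powr (-a))^k"
proof -
  have "((1/2::real)^k) powr a = exp (a * ln ((1/2)^k))" by (simp add: powr_def)
  also have "ln ((1/2::real)^k) = real k * ln (1/2)" by (simp add: ln_realpow)
  also have "ln (1/2::real) = - ln 2" by (simp add: ln_div)
  also have "a * (real k * - ln 2) = real k * (- a * ln 2)" by simp
  also have "exp (real k * (- a * ln 2)) = exp (- a * ln 2) ^ k" by (rule exp_of_nat_mult)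
  also have "exp (- a * ln 2) = (2::real) powr (-a)" by (simp add: powr_def)
  finally show ?thesis .
qed



lemma A_piece:
  fixes \<mu> :: "(real^'m::finite) measure" and F :: "(real^'m) set"
  assumes P: "prob_space \<mu>" and S: "sets \<mu> = sets borel"
    and ubd: "upper_box_dim F < ereal g2" and g: "g2 < g"
  shows "\<exists>N\<in>null_sets \<mu>. {x\<in>F. \<forall>\<delta>>0. \<exists>r>0. r < \<delta> \<and> measure \<mu> (Dbox x r) < r powr g} \<subseteq> N"
proof (cases "F = {}")
  case True then show ?thesis by (intro bexI[of _ "{}"]) auto
next
  case False
  interpret prob_space \<mu> by (rule P)
  have bF: "bounded F"
  proof (rule ccontr)
    assume "\<not> bounded F"
    then have "upper_box_dim F = \<infinity>" using False by (simp add: upper_box_dim_def)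
    with ubd show False by simp
  qed
  have "Limsup (at_right 0) (\<lambda>\<delta>. ereal (ln (real (cover_num F \<delta>)) / - ln \<delta>)) < ereal g2"
    using ubd False bF by (simp add: upper_box_dim_def)
  then have "eventually (\<lambda>\<delta>. ereal (ln (real (cover_num F \<delta>)) / - ln \<delta>) < ereal g2) (at_right 0)"
    by (rule Limsup_lessD)
  then obtain b where b: "b > 0" "\<And>\<delta>. \<delta> > 0 \<Longrightarrow> \<delta> < b \<Longrightarrow> ln (real (cover_num F \<delta>)) / - ln \<delta> < g2"
    unfolding eventually_at_right_field by auto
  have Nb: "real (cover_num F \<delta>) \<le> \<delta> powr (-g2)" if "0 < \<delta>" "\<delta> < min b 1" for \<delta>
  proof -
    have N1: "real (cover_num F \<delta>) \<ge> 1" using cover_num_pos[OF bF that(1) False] by simp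
    have l: "- ln \<delta> > 0" using that by simp
    have "ln (real (cover_num F \<delta>)) / - ln \<delta> < g2" using b(2) that by simp
    then have "ln (real (cover_num F \<delta>)) < g2 * (- ln \<delta>)" using l by (metis pos_divide_less_eq)
    then have "exp (ln (real (cover_num F \<delta>))) < exp (g2 * (- ln \<delta>))" by simp
    moreover have "exp (ln (real (cover_num F \<delta>))) = real (cover_num F \<delta>)" using N1 by simp
    moreover have "exp (g2 * (- ln \<delta>)) = \<delta> powr (-g2)" using that(1) by (simp add: powr_def)
    ultimately show ?thesis by simp
  qed
  define \<rho> where "\<rho> k = (1/2::real)^k" for k
  have \<rho>pos: "\<rho> k > 0" for k by (simp add: \<rho>_def)
  obtain K0 where K0: "\<rho> K0 < min b 1"
    using real_arch_pow_inv[of "min b 1" "1/2"] b(1) by (auto simp: \<rho>_def)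
  have \<rho>K: "\<rho> (k+2) < min b 1" if "k \<ge> K0" for k
  proof -
    have "\<rho> (k+2) \<le> \<rho> K0" unfolding \<rho>_def using that by (intro power_decreasing) auto
    then show ?thesis using K0 by simp
  qed
  define Cs where "Cs k = (SOME C. finite C \<and> card C = cover_num F (\<rho> (k+2)) \<and> F \<subseteq> (\<Union>c\<in>C. cball c (\<rho> (k+2))))" for k
  have Cs: "finite (Cs k) \<and> card (Cs k) = cover_num F (\<rho> (k+2)) \<and> F \<subseteq> (\<Union>c\<in>Cs k. cball c (\<rho> (k+2)))" for k
    unfolding Cs_def by (rule someI_ex) (rule cover_num_cover[OF bF \<rho>pos])
  define c0 where "c0 = (2::real) powr \<bar>g\<bar>"
  define T where "T k = {x\<in>F. measure \<mu> (Dbox x (\<rho> (k+1))) < c0 * \<rho> k powr g}" for k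
  define A where "A k = {c\<in>Cs k. cball c (\<rho> (k+2)) \<inter> T k \<noteq> {}}" for k
  define pick where "pick k c = (SOME a. a \<in> cball c (\<rho> (k+2)) \<inter> T k)" for k c
  define Sk where "Sk k = (if k < K0 then {} else \<Union>c\<in>A k. Dbox (pick k c) (\<rho> (k+1)))" for k
  have pick: "pick k c \<in> cball c (\<rho> (k+2)) \<inter> T k" if "c \<in> A k" for k c
  proof -
    from that have "cball c (\<rho> (k+2)) \<inter> T k \<noteq> {}" unfolding A_def by blast
    then obtain a where "a \<in> cball c (\<rho> (k+2)) \<inter> T k" by blast
    then show ?thesis unfolding pick_def by (rule someI)
  qed
  have finA: "finite (A k)" for k using Cs[of k] by (simp add: A_def)
  have AC: "A k \<subseteq> Cs k" for k by (auto simp: A_def)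
  have Skm: "Sk k \<in> sets \<mu>" for k
  proof -
    have "closed (Sk k)" unfolding Sk_def using finA[of k] by (auto intro!: closed_UN closed_Dbox)
    then show ?thesis using S by (simp add: borel_closed)
  qed
  define q where "q = (2::real) powr (g2 - g)"
  define B where "B = ((2::real) powr g2)^2 * c0"
  have q: "0 < q" "q < 1"
  proof -
    show "0 < q" by (simp add: q_def)
    have "(2::real) powr (g2 - g) < 2 powr 0" using g by (intro powr_less_mono) auto
    then show "q < 1" by (simp add: q_def)
  qed
  have Bpos: "B \<ge> 0" by (simp add: B_def c0_def)
  have Skb: "measure \<mu> (Sk k) \<le> B * q^k" for k
  proof (cases "k < K0")
    case True
    then show ?thesis using Bpos q by (simp add: Sk_def)
  next
    case False
    have "Sk k = (\<Union>c\<in>A k. Dbox (pick k c) (\<rho> (k+1)))"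
      using False unfolding Sk_def by (rule if_not_P)
    then have "measure \<mu> (Sk k) = measure \<mu> (\<Union>c\<in>A k. Dbox (pick k c) (\<rho> (k+1)))"
      by (rule arg_cong)
    also have "\<dots> \<le> (\<Sum>c\<in>A k. measure \<mu> (Dbox (pick k c) (\<rho> (k+1))))"
    proof (rule finite_measure_subadditive_finite[OF finA])
      show "(\<lambda>c. Dbox (pick k c) (\<rho> (k+1))) ` A k \<subseteq> sets \<mu>"
        unfolding S image_subset_iff by (simp add: Dbox_borel)
    qed
    also have "\<dots> \<le> (\<Sum>c\<in>A k. c0 * \<rho> k powr g)"
    proof (rule sum_mono)
      fix c assume "c \<in> A k"
      then have "pick k c \<in> T k" using pick by blast
      then show "measure \<mu> (Dbox (pick k c) (\<rho> (k+1))) \<le> c0 * \<rho> k powr g" by (simp add: T_def)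
    qed
    also have "\<dots> = real (card (A k)) * (c0 * \<rho> k powr g)" by simp
    also have "\<dots> \<le> real (card (Cs k)) * (c0 * \<rho> k powr g)"
    proof (rule mult_right_mono)
      have "card (A k) \<le> card (Cs k)" using Cs[of k] AC[of k] card_mono by blast
      then show "real (card (A k)) \<le> real (card (Cs k))" by simp
      show "0 \<le> c0 * \<rho> k powr g" by (simp add: c0_def)
    qed
    also have "\<dots> \<le> \<rho> (k+2) powr (-g2) * (c0 * \<rho> k powr g)"
      using Cs[of k] Nb[OF \<rho>pos \<rho>K] False by (intro mult_right_mono) (auto simp: c0_def)
    also have "\<dots> = B * q^k"
    proof -
      have "\<rho> (k+2) powr (-g2) = (2 powr (- (-g2)))^(k+2)" unfolding \<rho>_def by (rule half_pow_powr)
      moreover have "\<rho> k powr g = (2 powr (-g))^k" unfolding \<rho>_def by (rule half_pow_powr)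
      moreover have "(2::real) powr g2 * 2 powr (-g) = q" by (simp add: q_def powr_add[symmetric])
      ultimately show ?thesis
        by (simp add: B_def power_add power_mult_distrib[symmetric] mult_ac power2_eq_square)
    qed
    finally show ?thesis .
  qed
  have summ: "summable (\<lambda>k. measure \<mu> (Sk k))"
  proof (rule summable_comparison_test')
    show "summable (\<lambda>k. B * q^k)" using q by (intro summable_mult summable_geometric) simp
    show "norm (measure \<mu> (Sk k)) \<le> B * q^k" for k using Skb[of k] by simp
  qed
  have null: "limsup Sk \<in> null_sets \<mu>"
    by (rule borel_cantelli_limsup1) (use Skm summ in \<open>auto simp: less_top[symmetric]\<close>)
  show ?thesis
  proof (intro bexI[OF _ null] subsetI)
    fix x assume "x \<in> {x\<in>F. \<forall>\<delta>>0. \<exists>r>0. r < \<delta> \<and> measure \<mu> (Dbox x r) < r powr g}"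
    then have xF: "x \<in> F" and good: "\<And>\<delta>. \<delta> > 0 \<Longrightarrow> \<exists>r>0. r < \<delta> \<and> measure \<mu> (Dbox x r) < r powr g"
      by auto
    have inS: "\<exists>k\<ge>n. x \<in> Sk k" for n
    proof -
      define n' where "n' = max n K0"
      obtain r where r: "r > 0" "r < \<rho> n'" "measure \<mu> (Dbox x r) < r powr g"
        using good[OF \<rho>pos] by blast
      obtain k where k: "k \<ge> n'" "(1/2)^(k+1) < r" "r \<le> (1/2)^k"
        using dyadic_find[of r n'] r(1,2) by (auto simp: \<rho>_def)
      have "Dbox x (\<rho> (k+1)) \<subseteq> Dbox x r"
      proof
        fix z assume "z \<in> Dbox x (\<rho> (k+1))"
        then have "\<bar>z$i - x$i\<bar> \<le> \<rho> (k+1)" for i by (simp add: Dbox_def)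
        then have "\<bar>z$i - x$i\<bar> \<le> r" for i using k(2) unfolding \<rho>_def by (meson less_imp_le order_trans)
        then show "z \<in> Dbox x r" by (simp add: Dbox_def)
      qed
      then have "measure \<mu> (Dbox x (\<rho> (k+1))) \<le> measure \<mu> (Dbox x r)"
        using S by (intro finite_measure_mono) auto
      also have "\<dots> < r powr g" by (rule r(3))
      also have "\<dots> \<le> c0 * \<rho> k powr g" unfolding c0_def \<rho>_def by (rule powr_dyadic[OF k(2,3)])
      finally have xT: "x \<in> T k" using xF by (simp add: T_def)
      obtain c where c: "c \<in> Cs k" "x \<in> cball c (\<rho> (k+2))" using Cs[of k] xF by blast
      then have cA: "c \<in> A k" using xT by (auto simp: A_def)
      have p: "pick k c \<in> cball c (\<rho> (k+2))" using pick[OF cA] by blast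
      have "dist x (pick k c) \<le> dist x c + dist c (pick k c)" by (rule dist_triangle)
      also have "\<dots> \<le> \<rho> (k+2) + \<rho> (k+2)" using c(2) p by (simp add: dist_commute)
      also have "\<dots> = \<rho> (k+1)" by (simp add: \<rho>_def)
      finally have d: "dist x (pick k c) \<le> \<rho> (k+1)" .
      have "x \<in> Dbox (pick k c) (\<rho> (k+1))"
      proof -
        have "\<bar>x$i - pick k c$i\<bar> \<le> \<rho> (k+1)" for i
          using component_le_norm_cart[of "x - pick k c" i] d by (simp add: dist_norm)
        then show ?thesis by (simp add: Dbox_def)
      qed
      moreover have "\<not> k < K0" using k(1) by (simp add: n'_def)
      then have "Sk k = (\<Union>c\<in>A k. Dbox (pick k c) (\<rho> (k+1)))"
        unfolding Sk_def by (rule if_not_P)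
      ultimately have "x \<in> Sk k" using cA by blast
      then show ?thesis using k(1) by (intro exI[of _ k]) (simp add: n'_def)
    qed
    show "x \<in> limsup Sk"
      unfolding limsup_INF_SUP using inS by auto
  qed
qed



lemma good_of_liminf:
  fixes \<mu> :: "(real^'m::finite) measure"
  assumes P: "prob_space \<mu>" and S: "sets \<mu> = sets borel"
    and L: "Liminf (at_right 0) (\<lambda>r. ennreal (r powr (-\<gamma>)) * Gfun U \<mu> x r) = 0"
    and d: "\<delta> > 0"
  shows "\<exists>r>0. r < \<delta> \<and> measure \<mu> (Dbox x r) < r powr \<gamma>"
proof -
  interpret prob_space \<mu> by (rule P)
  define f where "f r = ennreal (r powr (-\<gamma>)) * emeasure \<mu> (Dbox x r)" for r
  have "eventually (\<lambda>r. f r \<le> ennreal (r powr (-\<gamma>)) * Gfun U \<mu> x r) (at_right 0)"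
  proof -
    have "eventually (\<lambda>r::real. r > 0) (at_right 0)" by (rule eventually_at_right_less)
    then show ?thesis
    proof (rule eventually_mono)
      fix r :: real assume "r > 0"
      then show "f r \<le> ennreal (r powr (-\<gamma>)) * Gfun U \<mu> x r"
        unfolding f_def by (intro mult_left_mono emeasure_Dbox_le_Gfun S) auto
    qed
  qed
  then have "Liminf (at_right 0) f \<le> Liminf (at_right 0) (\<lambda>r. ennreal (r powr (-\<gamma>)) * Gfun U \<mu> x r)"
    by (rule Liminf_mono)
  then have "Liminf (at_right 0) f \<le> 0" using L by simp
  then have "\<not> (1 \<le> Liminf (at_right 0) f)" by (simp add: not_le)
  then obtain y where y: "y < 1" "\<not> eventually (\<lambda>r. y < f r) (at_right 0)"
    unfolding le_Liminf_iff by blast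
  then have "\<not> (\<forall>r>0. r < \<delta> \<longrightarrow> y < f r)" using d unfolding eventually_at_right_field by blast
  then obtain r where r: "r > 0" "r < \<delta>" "f r \<le> y" by (auto simp: not_less)
  then have "f r < 1" using y(1) by simp
  moreover have "f r = ennreal (r powr (-\<gamma>) * measure \<mu> (Dbox x r))"
    unfolding f_def by (simp add: emeasure_eq_measure ennreal_mult)
  ultimately have "ennreal (r powr (-\<gamma>) * measure \<mu> (Dbox x r)) < ennreal 1" by simp
  moreover have "0 \<le> r powr (-\<gamma>) * measure \<mu> (Dbox x r)" by simp
  ultimately have "r powr (-\<gamma>) * measure \<mu> (Dbox x r) < 1" using ennreal_less_iff by blast
  then have "measure \<mu> (Dbox x r) < 1 / r powr (-\<gamma>)"
    using r(1) by (simp add: field_simps)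
  also have "1 / r powr (-\<gamma>) = r powr \<gamma>" by (simp add: powr_minus_divide)
  finally show ?thesis using r by blast
qed

lemma A_main:
  fixes \<mu> :: "(real^'m::finite) measure"
  assumes P: "prob_space \<mu>" and S: "sets \<mu> = sets borel"
    and AEL: "AE x in \<mu>. Liminf (at_right 0) (\<lambda>r. ennreal (r powr (-\<gamma>)) * Gfun U \<mu> x r) = 0"
  shows "ereal \<gamma> \<le> packing_dim_measure \<mu>"
  unfolding packing_dim_measure_def
proof (rule INF_greatest)
  interpret prob_space \<mu> by (rule P)
  fix E assume "E \<in> {E. E \<in> sets borel \<and> measure \<mu> E > 0}"
  then have EB: "E \<in> sets borel" and Epos: "measure \<mu> E > 0" by auto
  define good where "good x = (\<forall>\<delta>>0. \<exists>r>0. r < \<delta> \<and> measure \<mu> (Dbox x r) < r powr \<gamma>)" for x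
  have "AE x in \<mu>. good x"
    using AEL unfolding good_def by eventually_elim (use good_of_liminf[OF P S] in blast)
  then obtain N0 where N0: "{x\<in>space \<mu>. \<not> good x} \<subseteq> N0" "N0 \<in> null_sets \<mu>"
    by (auto elim!: AE_E)
  have sp: "space \<mu> = UNIV" using S by (metis sets_eq_imp_space_eq space_borel)
  show "ereal \<gamma> \<le> packing_dim E"
    unfolding packing_dim_def
  proof (rule INF_greatest)
    fix Fs assume "Fs \<in> {F :: nat \<Rightarrow> _. E \<subseteq> (\<Union>i. F i)}"
    then have EF: "E \<subseteq> (\<Union>i. Fs i)" by simp
    show "ereal \<gamma> \<le> (SUP i. upper_box_dim (Fs i))"
    proof (rule ccontr)
      assume "\<not> ereal \<gamma> \<le> (SUP i. upper_box_dim (Fs i))"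
      then have "(SUP i. upper_box_dim (Fs i)) < ereal \<gamma>" by (simp add: not_le)
      then obtain g2 where g2: "(SUP i. upper_box_dim (Fs i)) < ereal g2" "ereal g2 < ereal \<gamma>"
        using ereal_dense2 by blast
      have "\<exists>N\<in>null_sets \<mu>. {x\<in>Fs i. good x} \<subseteq> N" for i
      proof -
        have "upper_box_dim (Fs i) \<le> (SUP i. upper_box_dim (Fs i))" by (rule SUP_upper) simp
        then have "upper_box_dim (Fs i) < ereal g2" using g2(1) by (rule le_less_trans)
        from A_piece[OF P S this] g2(2) show ?thesis unfolding good_def by simp
      qed
      then obtain N where N: "\<And>i. N i \<in> null_sets \<mu>" "\<And>i. {x\<in>Fs i. good x} \<subseteq> N i"
        by metis
      have "E \<subseteq> N0 \<union> (\<Union>i. N i)"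
      proof
        fix x assume "x \<in> E"
        show "x \<in> N0 \<union> (\<Union>i. N i)"
        proof (cases "good x")
          case True
          from \<open>x \<in> E\<close> EF obtain i where "x \<in> Fs i" by blast
          then show ?thesis using N(2)[of i] True by blast
        next
          case False then show ?thesis using N0(1) sp by blast
        qed
      qed
      moreover have nU: "N0 \<union> (\<Union>i. N i) \<in> null_sets \<mu>"
        using N0(2) N(1) by (intro null_sets.Un null_sets_UN) auto
      moreover have "E \<in> sets \<mu>" using EB S by simp
      ultimately have "E \<in> null_sets \<mu>" by (intro null_sets_subset[OF nU])
      then have "measure \<mu> E = 0" by (simp add: measure_def null_setsD1)
      then show False using Epos by simp
    qed
  qed
qed



lemma harm_le_ln: "n \<ge> 1 \<Longrightarrow> (harm n :: real) \<le> 1 + ln (real n)"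
proof (induction n rule: dec_induct)
  case base
  then show ?case by (simp add: harm_expand)
next
  case (step n)
  have n: "real n \<ge> 1" using step.hyps by simp
  have "ln (real n / real (Suc n)) \<le> real n / real (Suc n) - 1"
    using n by (intro ln_le_minus_one) simp
  also have "real n / real (Suc n) - 1 = - (1 / real (Suc n))" by (simp add: field_simps)
  finally have "ln (real n) - ln (real (Suc n)) \<le> - (1 / real (Suc n))"
    using n by (simp add: ln_div)
  then have "1 / real (Suc n) \<le> ln (real (Suc n)) - ln (real n)" by linarith
  moreover have "harm (Suc n) = harm n + 1 / real (Suc n)" by (simp add: harm_Suc divide_inverse)
  ultimately show ?case using step.IH by linarith
qed

lemma side_sum:
  fixes w :: real and M :: int and A :: "int set"
  assumes A: "A \<subseteq> {-M..M}" and w: "\<forall>k\<in>A. w + 2 < real_of_int k"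
  shows "(\<Sum>k\<in>A. 1 / (real_of_int k - w - 1)) \<le> harm (nat (2*M+1))"
proof (cases "A = {}")
  case True then show ?thesis by (simp add: harm_nonneg)
next
  case False
  then obtain k0 where "k0 \<in> A" by blast
  then have M: "M \<ge> 0" using A by auto
  have finA: "finite A" using A finite_subset by blast
  define c where "c = max \<lceil>w + 2\<rceil> (-M)"
  have cw: "real_of_int c \<ge> w + 2" unfolding c_def by linarith
  have kc: "k \<ge> c" if "k \<in> A" for k
  proof -
    have "real_of_int k > w + 2" using w that by blast
    then have "k \<ge> \<lceil>w + 2\<rceil>" by linarith
    moreover have "k \<ge> -M" using A that by auto
    ultimately show ?thesis by (simp add: c_def)
  qed
  define j where "j k = nat (k - c)" for k
  have injj: "inj_on j A"
  proof (rule inj_onI)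
    fix a b assume ab: "a \<in> A" "b \<in> A" "j a = j b"
    have "a - c \<ge> 0" "b - c \<ge> 0" using kc ab(1,2) by auto
    then have "a - c = b - c" using ab(3) unfolding j_def by (simp add: eq_nat_nat_iff)
    then show "a = b" by simp
  qed
  have jrange: "j ` A \<subseteq> {..<nat (2*M+1)}"
  proof
    fix x assume "x \<in> j ` A"
    then obtain k where k: "k \<in> A" "x = j k" by blast
    have "k \<le> M" using A k(1) by auto
    moreover have "c \<ge> -M" by (simp add: c_def)
    ultimately show "x \<in> {..<nat (2*M+1)}" using kc[OF k(1)] M unfolding k(2) j_def by auto
  qed
  have "(\<Sum>k\<in>A. 1 / (real_of_int k - w - 1)) \<le> (\<Sum>k\<in>A. inverse (of_nat (Suc (j k))))"
  proof (rule sum_mono)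
    fix k assume k: "k \<in> A"
    have jk: "real (j k) = real_of_int k - real_of_int c" using kc[OF k] by (simp add: j_def)
    have "real_of_int k - w - 1 \<ge> real (Suc (j k))" using jk cw by simp
    moreover have "real (Suc (j k)) > 0" by simp
    ultimately show "1 / (real_of_int k - w - 1) \<le> inverse (of_nat (Suc (j k)))"
      by (simp add: divide_inverse le_imp_inverse_le)
  qed
  also have "\<dots> = (\<Sum>x\<in>j ` A. inverse (of_nat (Suc x)))"
    by (rule sum.reindex[OF injj, symmetric, unfolded comp_def])
  also have "\<dots> \<le> (\<Sum>x<nat (2*M+1). inverse (of_nat (Suc x)))"
    by (rule sum_mono2[OF _ jrange]) auto
  also have "\<dots> = harm (nat (2*M+1))" by (simp add: harm_altdef)
  finally show ?thesis .
qed

lemma near_card: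
  fixes w :: real
  shows "card {k::int\<in>A. \<bar>w - real_of_int k\<bar> \<le> 2} \<le> 5"
proof -
  define a where "a = \<lceil>w - 2\<rceil>"
  have "{k::int\<in>A. \<bar>w - real_of_int k\<bar> \<le> 2} \<subseteq> {a..a+4}"
  proof
    fix k assume "k \<in> {k::int\<in>A. \<bar>w - real_of_int k\<bar> \<le> 2}"
    then have "w - 2 \<le> real_of_int k" "real_of_int k \<le> w + 2" by auto
    moreover have "real_of_int a \<ge> w - 2" "real_of_int a < w - 1" unfolding a_def by linarith+
    ultimately have "a \<le> k" "k < a + 5" unfolding a_def by linarith+
    then show "k \<in> {a..a+4}" by simp
  qed
  then have "card {k::int\<in>A. \<bar>w - real_of_int k\<bar> \<le> 2} \<le> card {a..a+4}"
    by (intro card_mono) auto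
  also have "card {a..a+4} = 5" by simp
  finally show ?thesis .
qed

definition phiU :: "real \<Rightarrow> int \<Rightarrow> real" where
  "phiU w k = (if \<bar>w - real_of_int k\<bar> \<le> 2 then 1 else 0)"
definition phiV :: "real \<Rightarrow> int \<Rightarrow> real" where
  "phiV w k = (if \<bar>w - real_of_int k\<bar> \<le> 2 then 1 else 1 / (\<bar>w - real_of_int k\<bar> - 1))"

lemma phiU_nonneg: "phiU w k \<ge> 0" by (simp add: phiU_def)
lemma phiV_nonneg: "phiV w k \<ge> 0" by (simp add: phiV_def)

lemma sum_phiU: "(\<Sum>k\<in>{-M..M}. phiU w k) \<le> 5"
proof -
  have "(\<Sum>k\<in>{-M..M}. phiU w k) = (\<Sum>k\<in>{k\<in>{-M..M}. \<bar>w - real_of_int k\<bar> \<le> 2}. 1)"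
    unfolding phiU_def by (rule sum.inter_filter[symmetric]) simp
  also have "\<dots> = real (card {k\<in>{-M..M}. \<bar>w - real_of_int k\<bar> \<le> 2})" by simp
  also have "\<dots> \<le> 5" using near_card[of "{-M..M}" w] by simp
  finally show ?thesis .
qed

lemma sum_phiV: "(\<Sum>k\<in>{-M..M}. phiV w k) \<le> 5 + 2 * harm (nat (2*M+1))"
proof -
  define g2 where "g2 k = (if w + 2 < real_of_int k then 1 / (real_of_int k - w - 1) else 0)" for k
  define g3 where "g3 k = (if real_of_int k < w - 2 then 1 / (w - real_of_int k - 1) else 0)" for k
  have "(\<Sum>k\<in>{-M..M}. phiV w k) \<le> (\<Sum>k\<in>{-M..M}. phiU w k + g2 k + g3 k)"
  proof (rule sum_mono)
    fix k :: int
    show "phiV w k \<le> phiU w k + g2 k + g3 k"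
    proof (cases "\<bar>w - real_of_int k\<bar> \<le> 2")
      case True
      have "g2 k \<ge> 0" "g3 k \<ge> 0" using True by (auto simp: g2_def g3_def)
      then show ?thesis using True by (simp add: phiV_def phiU_def)
    next
      case False
      then consider "w + 2 < real_of_int k" | "real_of_int k < w - 2" by linarith
      then show ?thesis
      proof cases
        case 1
        then have "\<bar>w - real_of_int k\<bar> = real_of_int k - w" by simp
        then show ?thesis using 1 False by (simp add: phiV_def phiU_def g2_def g3_def)
      next
        case 2
        then have "\<bar>w - real_of_int k\<bar> = w - real_of_int k" by simp
        then show ?thesis using 2 False by (simp add: phiV_def phiU_def g2_def g3_def)
      qed
    qed
  qed
  also have "\<dots> = (\<Sum>k\<in>{-M..M}. phiU w k) + (\<Sum>k\<in>{-M..M}. g2 k) + (\<Sum>k\<in>{-M..M}. g3 k)"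
    by (simp add: sum.distrib)
  also have "(\<Sum>k\<in>{-M..M}. g2 k) \<le> harm (nat (2*M+1))"
  proof -
    have "(\<Sum>k\<in>{-M..M}. g2 k) = (\<Sum>k\<in>{k\<in>{-M..M}. w + 2 < real_of_int k}. 1 / (real_of_int k - w - 1))"
      unfolding g2_def by (rule sum.inter_filter[symmetric]) simp
    also have "\<dots> \<le> harm (nat (2*M+1))" by (rule side_sum) auto
    finally show ?thesis .
  qed
  also have "(\<Sum>k\<in>{-M..M}. g3 k) \<le> harm (nat (2*M+1))"
  proof -
    define A3 where "A3 = {k\<in>{-M..M}. real_of_int k < w - 2}"
    have "(\<Sum>k\<in>{-M..M}. g3 k) = (\<Sum>k\<in>A3. 1 / (w - real_of_int k - 1))"
      unfolding g3_def A3_def by (rule sum.inter_filter[symmetric]) simp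
    also have "\<dots> = (\<Sum>k\<in>uminus ` A3. 1 / (real_of_int k - (-w) - 1))"
      by (subst sum.reindex) (auto intro: inj_onI)
    also have "\<dots> \<le> harm (nat (2*M+1))"
      by (rule side_sum) (auto simp: A3_def)
    finally show ?thesis .
  qed
  finally show ?thesis using sum_phiU[of w M] by linarith
qed



definition phi :: "'m set \<Rightarrow> real^'m \<Rightarrow> real \<Rightarrow> 'm \<Rightarrow> int \<Rightarrow> real" where
  "phi U z r i k = (if i \<in> U then phiU (z$i / r) k else phiV (z$i / r) k)"

definition Kf :: "'m set \<Rightarrow> real^'m::finite \<Rightarrow> real \<Rightarrow> real^'m \<Rightarrow> ennreal" where
  "Kf U x r z = indicator {z. \<forall>i\<in>U. \<bar>z$i - x$i\<bar> \<le> r} z *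
              ennreal (\<Prod>i\<in>-U. Ifac ((z$i - x$i) / r))"

lemma Gfun_Kf: "Gfun U \<mu> x r = (\<integral>\<^sup>+ z. Kf U x r z \<partial>\<mu>)"
  unfolding Gfun_def Kf_def ..

lemma coord_near:
  fixes r t w :: real
  assumes r: "r > 0"
  shows "\<bar>w - real_of_int \<lfloor>t / r\<rfloor>\<bar> < \<bar>w - t / r\<bar> + 1"
proof -
  have "real_of_int \<lfloor>t / r\<rfloor> \<le> t / r" "t / r < real_of_int \<lfloor>t / r\<rfloor> + 1" by linarith+
  then show ?thesis by linarith
qed

lemma kernel_bound:
  fixes x z :: "real^'m::finite"
  assumes r: "r > 0"
  shows "Kf U x r z \<le> ennreal (\<Prod>i\<in>UNIV. phi U z r i \<lfloor>x$i / r\<rfloor>)"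
proof (cases "z \<in> {z. \<forall>i\<in>U. \<bar>z$i - x$i\<bar> \<le> r}")
  case False
  then show ?thesis by (simp add: Kf_def)
next
  case True
  have "(\<Prod>i\<in>UNIV. phi U z r i \<lfloor>x$i / r\<rfloor>) =
        (\<Prod>i\<in>UNIV \<inter> U. phi U z r i \<lfloor>x$i / r\<rfloor>) * (\<Prod>i\<in>UNIV - U. phi U z r i \<lfloor>x$i / r\<rfloor>)"
    by (rule prod.Int_Diff) simp
  also have "(\<Prod>i\<in>UNIV \<inter> U. phi U z r i \<lfloor>x$i / r\<rfloor>) = 1"
  proof (rule prod.neutral, rule ballI)
    fix i assume i: "i \<in> UNIV \<inter> U"
    then have "\<bar>z$i - x$i\<bar> \<le> r" using True by simp
    then have "\<bar>z$i / r - x$i / r\<bar> \<le> 1" using r by (simp add: diff_divide_distrib[symmetric] abs_divide)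
    then have "\<bar>z$i / r - real_of_int \<lfloor>x$i / r\<rfloor>\<bar> < 2" using coord_near[OF r, of "z$i/r" "x$i"] by linarith
    then show "phi U z r i \<lfloor>x$i / r\<rfloor> = 1" using i by (simp add: phi_def phiU_def)
  qed
  also have "UNIV - U = -U" by auto
  finally have eq: "(\<Prod>i\<in>UNIV. phi U z r i \<lfloor>x$i / r\<rfloor>) = (\<Prod>i\<in>-U. phi U z r i \<lfloor>x$i / r\<rfloor>)" by simp
  have "(\<Prod>i\<in>-U. Ifac ((z$i - x$i) / r)) \<le> (\<Prod>i\<in>-U. phi U z r i \<lfloor>x$i / r\<rfloor>)"
  proof (rule prod_mono, rule conjI)
    fix i assume i: "i \<in> -U"
    show "0 \<le> Ifac ((z$i - x$i) / r)" by (rule Ifac_nonneg)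
    define w where "w = z$i / r"
    define s where "s = (z$i - x$i) / r"
    have s: "s = w - x$i / r" unfolding s_def w_def by (simp add: diff_divide_distrib)
    have near: "\<bar>w - real_of_int \<lfloor>x$i / r\<rfloor>\<bar> < \<bar>s\<bar> + 1" using coord_near[OF r, of w "x$i"] s by simp
    have ph: "phi U z r i \<lfloor>x$i / r\<rfloor> = phiV w \<lfloor>x$i / r\<rfloor>" using i by (simp add: phi_def w_def)
    show "Ifac s \<le> phi U z r i \<lfloor>x$i / r\<rfloor>" unfolding ph
    proof (cases "\<bar>w - real_of_int \<lfloor>x$i / r\<rfloor>\<bar> \<le> 2")
      case True
      then show "Ifac s \<le> phiV w \<lfloor>x$i / r\<rfloor>" using Ifac_le1[of s] by (simp add: phiV_def)
    next
      case False
      define d where "d = \<bar>w - real_of_int \<lfloor>x$i / r\<rfloor>\<bar>"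
      have d2: "d > 2" using False by (simp add: d_def)
      have sd: "\<bar>s\<bar> > d - 1" using near by (simp add: d_def)
      then have "s \<noteq> 0" using d2 by auto
      then have "Ifac s \<le> 1 / \<bar>s\<bar>" by (rule Ifac_le_inv)
      also have "\<dots> \<le> 1 / (d - 1)" using sd d2 by (intro divide_left_mono) auto
      finally show "Ifac s \<le> phiV w \<lfloor>x$i / r\<rfloor>" using False by (simp add: phiV_def d_def)
    qed
  qed
  then show ?thesis using True eq by (simp add: Kf_def ennreal_leI)
qed



lemma floor_range:
  fixes t m r :: real
  assumes r: "r > 0" and t: "\<bar>t\<bar> \<le> m"
  shows "\<lfloor>t / r\<rfloor> \<in> {-(\<lceil>m/r\<rceil>+1)..\<lceil>m/r\<rceil>+1}"
proof -
  have "t \<le> m" "- m \<le> t" using t by auto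
  have a1: "t / r \<le> m / r" by (rule divide_right_mono) (use r \<open>t \<le> m\<close> in auto)
  have a2: "(- m) / r \<le> t / r" by (rule divide_right_mono) (use r \<open>- m \<le> t\<close> in auto)
  have a: "t / r \<le> m / r" "- (m / r) \<le> t / r" using a1 a2 by simp_all
  have b: "real_of_int \<lfloor>t / r\<rfloor> \<le> t / r" "t / r < real_of_int \<lfloor>t / r\<rfloor> + 1" by linarith+
  have c: "m / r \<le> real_of_int \<lceil>m / r\<rceil>" by linarith
  have "real_of_int \<lfloor>t / r\<rfloor> \<le> real_of_int (\<lceil>m/r\<rceil>+1)" using a b c by (simp only: of_int_add of_int_1; linarith)
  moreover have "real_of_int (-(\<lceil>m/r\<rceil>+1)) \<le> real_of_int \<lfloor>t / r\<rfloor>" using a b c by (simp only: of_int_add of_int_1 of_int_minus; linarith)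
  ultimately show ?thesis by (simp only: of_int_le_iff atLeastAtMost_iff; simp)
qed

lemma count_bound:
  fixes \<mu> :: "(real^'m::finite) measure" and P :: "(real^'m) set"
  assumes Pr: "prob_space \<mu>" and S: "sets \<mu> = sets borel" and r: "r > 0"
    and Pbd: "\<And>x i. x \<in> P \<Longrightarrow> \<bar>x$i\<bar> \<le> m"
    and PG: "\<And>x. x \<in> P \<Longrightarrow> ennreal c \<le> Gfun U \<mu> x r" and c: "c \<ge> 0"
  shows "real (card ((\<lambda>x. (\<lambda>i. \<lfloor>x$i / r\<rfloor>)) ` P)) * c
           \<le> (5 + 2 * harm (nat (2*(\<lceil>m/r\<rceil>+1)+1)))^CARD('m)"
proof -
  interpret prob_space \<mu> by (rule Pr)
  define qf where "qf x = (\<lambda>i. \<lfloor>x$i / r\<rfloor>)" for x :: "real^'m"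
  define Q where "Q = qf ` P"
  define M where "M = \<lceil>m/r\<rceil>+1"
  define Bd :: real where "Bd = 5 + 2 * harm (nat (2*M+1))"
  define PiM where "PiM = PiE (UNIV::'m set) (\<lambda>_. {-M..M})"
  have Bd0: "Bd \<ge> 5" by (simp add: Bd_def harm_nonneg)
  have QPi: "Q \<subseteq> PiM"
  proof
    fix q assume "q \<in> Q"
    then obtain x where x: "x \<in> P" "q = qf x" by (auto simp: Q_def)
    have "q i \<in> {-M..M}" for i using floor_range[OF r Pbd[OF x(1)]] unfolding x(2) qf_def M_def by simp
    then show "q \<in> PiM" by (simp add: PiM_def PiE_UNIV_domain)
  qed
  have finPi: "finite PiM" unfolding PiM_def by (intro finite_PiE) auto
  have finQ: "finite Q" using QPi finPi finite_subset by blast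
  define xq where "xq q = (SOME x. x \<in> P \<and> qf x = q)" for q
  have xq: "xq q \<in> P \<and> qf (xq q) = q" if "q \<in> Q" for q
  proof -
    from that obtain x where "x \<in> P \<and> qf x = q" by (auto simp: Q_def)
    then show ?thesis unfolding xq_def by (rule someI)
  qed
  have meas: "Kf U x r \<in> borel_measurable \<mu>" for x
    using Gfun_integrand_measurable[of U x r] S unfolding Kf_def[abs_def]
    by (simp add: measurable_cong_sets[OF S refl])
  have pw: "(\<Sum>q\<in>Q. Kf U (xq q) r z) \<le> ennreal (Bd ^ CARD('m))" for z
  proof -
    have "(\<Sum>q\<in>Q. Kf U (xq q) r z) \<le> (\<Sum>q\<in>Q. ennreal (\<Prod>i\<in>UNIV. phi U z r i (q i)))"
    proof (rule sum_mono)
      fix q assume q: "q \<in> Q"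
      have "Kf U (xq q) r z \<le> ennreal (\<Prod>i\<in>UNIV. phi U z r i \<lfloor>xq q $ i / r\<rfloor>)"
        by (rule kernel_bound[OF r])
      also have "(\<lambda>i. \<lfloor>xq q $ i / r\<rfloor>) = q" using xq[OF q] by (simp add: qf_def)
      finally show "Kf U (xq q) r z \<le> ennreal (\<Prod>i\<in>UNIV. phi U z r i (q i))" .
    qed
    also have "\<dots> = ennreal (\<Sum>q\<in>Q. \<Prod>i\<in>UNIV. phi U z r i (q i))"
      by (rule sum_ennreal) (auto intro!: prod_nonneg simp: phi_def phiU_nonneg phiV_nonneg)
    also have "\<dots> \<le> ennreal (\<Sum>q\<in>PiM. \<Prod>i\<in>UNIV. phi U z r i (q i))"
      by (intro ennreal_leI sum_mono2[OF finPi QPi]) (auto intro!: prod_nonneg simp: phi_def phiU_nonneg phiV_nonneg)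
    also have "(\<Sum>q\<in>PiM. \<Prod>i\<in>UNIV. phi U z r i (q i)) = (\<Prod>i\<in>UNIV. \<Sum>k\<in>{-M..M}. phi U z r i k)"
      unfolding PiM_def by (rule prod_sum_PiE[symmetric]) auto
    also have "\<dots> \<le> (\<Prod>i\<in>(UNIV::'m set). Bd)"
    proof (rule prod_mono, rule conjI)
      fix i :: 'm
      show "0 \<le> (\<Sum>k\<in>{-M..M}. phi U z r i k)"
        by (intro sum_nonneg) (simp add: phi_def phiU_nonneg phiV_nonneg)
      show "(\<Sum>k\<in>{-M..M}. phi U z r i k) \<le> Bd"
      proof (cases "i \<in> U")
        case True
        then have "(\<Sum>k\<in>{-M..M}. phi U z r i k) = (\<Sum>k\<in>{-M..M}. phiU (z$i/r) k)" by (simp add: phi_def)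
        also have "\<dots> \<le> 5" by (rule sum_phiU)
        finally show ?thesis using Bd0 by linarith
      next
        case False
        then have "(\<Sum>k\<in>{-M..M}. phi U z r i k) = (\<Sum>k\<in>{-M..M}. phiV (z$i/r) k)" by (simp add: phi_def)
        also have "\<dots> \<le> Bd" unfolding Bd_def by (rule sum_phiV)
        finally show ?thesis .
      qed
    qed
    also have "(\<Prod>i\<in>(UNIV::'m set). Bd) = Bd ^ CARD('m)" by simp
    finally show ?thesis by (simp add: ennreal_leI)
  qed
  have e1: "(\<Sum>q\<in>Q. ennreal c) = ennreal (\<Sum>q\<in>Q. c)" by (rule sum_ennreal) (use c in simp)
  have "ennreal (real (card Q) * c) = ennreal (\<Sum>q\<in>Q. c)" by simp
  also have "\<dots> = (\<Sum>q\<in>Q. ennreal c)" using e1 by simp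
  also have "\<dots> \<le> (\<Sum>q\<in>Q. Gfun U \<mu> (xq q) r)" using xq PG by (intro sum_mono) blast
  also have "\<dots> = (\<Sum>q\<in>Q. \<integral>\<^sup>+ z. Kf U (xq q) r z \<partial>\<mu>)" by (simp add: Gfun_Kf)
  also have "\<dots> = (\<integral>\<^sup>+ z. (\<Sum>q\<in>Q. Kf U (xq q) r z) \<partial>\<mu>)"
    by (rule nn_integral_sum[symmetric]) (rule meas)
  also have "\<dots> \<le> (\<integral>\<^sup>+ z. ennreal (Bd ^ CARD('m)) \<partial>\<mu>)" by (intro nn_integral_mono pw)
  also have "\<dots> = ennreal (Bd ^ CARD('m))" by (simp add: emeasure_space_1)
  finally have "ennreal (real (card Q) * c) \<le> ennreal (Bd ^ CARD('m))" .
  then have "real (card Q) * c \<le> Bd ^ CARD('m)" using Bd0 by (simp add: ennreal_le_iff)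
  then show ?thesis by (simp add: Q_def qf_def Bd_def M_def)
qed



lemma asym_lim:
  fixes m a g :: real assumes "m > 0" "a > 0"
  shows "((\<lambda>d. (ln m - g * ln (d / a) + a * ln (7 + 2 * ln (2 * m * a / d + 5))) / (- ln d)) \<longlongrightarrow> g) (at_right 0)"
  using assms by real_asymp

lemma bounded_box:
  fixes P :: "(real^'m::finite) set"
  assumes "\<And>x i. x \<in> P \<Longrightarrow> \<bar>x$i\<bar> \<le> m"
  shows "bounded P"
  unfolding bounded_iff
proof (intro exI ballI)
  fix x assume "x \<in> P"
  have "norm x \<le> (\<Sum>i\<in>UNIV. \<bar>x$i\<bar>)" by (rule norm_le_l1_cart)
  also have "\<dots> \<le> (\<Sum>i\<in>(UNIV::'m set). m)" using assms \<open>x \<in> P\<close> by (intro sum_mono) auto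
  finally show "norm x \<le> real CARD('m) * m" by simp
qed

lemma cover_closure_bound:
  fixes P :: "(real^'m::finite) set"
  assumes r: "r > 0" and Pbd: "\<And>x i. x \<in> P \<Longrightarrow> \<bar>x$i\<bar> \<le> m"
  shows "cover_num (closure P) (real CARD('m) * r) \<le> card ((\<lambda>x. (\<lambda>i. \<lfloor>x$i / r\<rfloor>)) ` P)"
    and "finite ((\<lambda>x. (\<lambda>i. \<lfloor>x$i / r\<rfloor>)) ` P)"
proof -
  define qf where "qf x = (\<lambda>i. \<lfloor>x$i / r\<rfloor>)" for x :: "real^'m"
  define Q where "Q = qf ` P"
  define M where "M = \<lceil>m/r\<rceil>+1"
  have QPi: "Q \<subseteq> PiE (UNIV::'m set) (\<lambda>_. {-M..M})"
  proof
    fix q assume "q \<in> Q"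
    then obtain x where x: "x \<in> P" "q = qf x" by (auto simp: Q_def)
    have "q i \<in> {-M..M}" for i using floor_range[OF r Pbd[OF x(1)]] unfolding x(2) qf_def M_def by simp
    then show "q \<in> PiE (UNIV::'m set) (\<lambda>_. {-M..M})" by (simp add: PiE_UNIV_domain)
  qed
  have finQ: "finite Q" using QPi by (rule finite_subset) (intro finite_PiE, auto)
  then show "finite ((\<lambda>x. (\<lambda>i. \<lfloor>x$i / r\<rfloor>)) ` P)" by (simp add: Q_def qf_def)
  define xq where "xq q = (SOME x. x \<in> P \<and> qf x = q)" for q
  have xq: "xq q \<in> P \<and> qf (xq q) = q" if "q \<in> Q" for q
  proof -
    from that obtain x where "x \<in> P \<and> qf x = q" by (auto simp: Q_def)
    then show ?thesis unfolding xq_def by (rule someI)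
  qed
  have PC: "P \<subseteq> (\<Union>c\<in>xq ` Q. cball c (real CARD('m) * r))"
  proof
    fix x assume x: "x \<in> P"
    define q where "q = qf x"
    have q: "q \<in> Q" using x by (simp add: Q_def q_def)
    define y where "y = xq q"
    have y: "qf y = q" using xq[OF q] by (simp add: y_def)
    have "\<bar>y$i - x$i\<bar> < r" for i
    proof -
      have fl: "\<lfloor>y$i / r\<rfloor> = \<lfloor>x$i / r\<rfloor>" using y unfolding q_def qf_def by meson
      have "\<bar>y$i / r - x$i / r\<bar> < 1" using fl by linarith
      then have "\<bar>(y$i - x$i) / r\<bar> < 1" by (simp add: diff_divide_distrib)
      then show ?thesis using r by (simp add: abs_divide)
    qed
    then have "dist y x \<le> real CARD('m) * r"
    proof -
      assume h: "\<And>i. \<bar>y$i - x$i\<bar> < r"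
      have "dist y x = norm (y - x)" by (simp add: dist_norm)
      also have "\<dots> \<le> (\<Sum>i\<in>UNIV. \<bar>(y - x)$i\<bar>)" by (rule norm_le_l1_cart)
      also have "\<dots> \<le> (\<Sum>i\<in>(UNIV::'m set). r)" using h by (intro sum_mono) (simp add: less_imp_le)
      finally show ?thesis by simp
    qed
    then show "x \<in> (\<Union>c\<in>xq ` Q. cball c (real CARD('m) * r))"
      using q unfolding y_def by (auto simp: mem_cball)
  qed
  have "closed (\<Union>c\<in>xq ` Q. cball c (real CARD('m) * r))"
    using finQ by (intro closed_UN) auto
  then have "closure P \<subseteq> (\<Union>c\<in>xq ` Q. cball c (real CARD('m) * r))"
    using PC by (rule closure_minimal[rotated])
  then have "cover_num (closure P) (real CARD('m) * r) \<le> card (xq ` Q)"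
    using finQ by (intro cover_num_le) auto
  also have "\<dots> \<le> card Q" using finQ by (rule card_image_le)
  finally show "cover_num (closure P) (real CARD('m) * r) \<le> card ((\<lambda>x. (\<lambda>i. \<lfloor>x$i / r\<rfloor>)) ` P)"
    by (simp add: Q_def qf_def)
qed



lemma B_box:
  fixes \<mu> :: "(real^'m::finite) measure" and P :: "(real^'m) set"
  assumes Pr: "prob_space \<mu>" and S: "sets \<mu> = sets borel" and m: "m > 0" and Pne: "P \<noteq> {}"
    and Pbd: "\<And>x i. x \<in> P \<Longrightarrow> \<bar>x$i\<bar> \<le> m"
    and PG: "\<And>x r. x \<in> P \<Longrightarrow> 0 < r \<Longrightarrow> r < 1/m \<Longrightarrow> ennreal (r powr \<gamma> / m) \<le> Gfun U \<mu> x r"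
  shows "upper_box_dim (closure P) \<le> ereal \<gamma>"
proof -
  define a where "a = real CARD('m)"
  have a: "a > 0" by (simp add: a_def)
  define \<Phi> where "\<Phi> r = 7 + 2 * ln (2 * m / r + 5)" for r
  define Q where "Q r = (\<lambda>x. (\<lambda>i. \<lfloor>x$i / r\<rfloor>)) ` P" for r
  have \<Phi>pos: "\<Phi> r > 0" if "r > 0" for r
  proof -
    have "2 * m / r + 5 > 1" using m that by (simp add: add_pos_pos)
    then have "ln (2 * m / r + 5) > 0" by simp
    then show ?thesis by (simp add: \<Phi>_def)
  qed
  have keyQ: "real (card (Q r)) \<le> m * r powr (-\<gamma>) * \<Phi> r ^ CARD('m)" if r: "0 < r" "r < 1/m" for r
  proof -
    have cb: "real (card (Q r)) * (r powr \<gamma> / m) \<le> (5 + 2 * harm (nat (2*(\<lceil>m/r\<rceil>+1)+1)))^CARD('m)"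
      unfolding Q_def
    proof (rule count_bound[OF Pr S r(1) Pbd])
      show "\<And>x. x \<in> P \<Longrightarrow> ennreal (r powr \<gamma> / m) \<le> Gfun U \<mu> x r" using PG r by blast
      show "0 \<le> r powr \<gamma> / m" using m by simp
    qed
    define n where "n = nat (2*(\<lceil>m/r\<rceil>+1)+1)"
    have "m / r > 0" using m r(1) by simp
    then have c0: "\<lceil>m/r\<rceil> \<ge> 0" by linarith
    have ni: "int n = 2*(\<lceil>m/r\<rceil>+1)+1" unfolding n_def using c0 by (intro int_nat_eq[THEN trans]) simp
    have "int n \<ge> 1" unfolding ni using c0 by simp
    then have n1: "n \<ge> 1" by simp
    have "real n = real_of_int (int n)" by simp
    also have "\<dots> = 2 * real_of_int \<lceil>m/r\<rceil> + 3" unfolding ni by simp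
    finally have "real n = 2 * real_of_int \<lceil>m/r\<rceil> + 3" .
    moreover have "real_of_int \<lceil>m/r\<rceil> < m/r + 1" by linarith
    ultimately have nle: "real n \<le> 2 * m / r + 5" by simp
    have "harm n \<le> 1 + ln (real n)" using n1 by (rule harm_le_ln)
    also have "ln (real n) \<le> ln (2 * m / r + 5)" using n1 nle by (intro ln_mono) auto
    finally have "5 + 2 * harm n \<le> \<Phi> r" by (simp add: \<Phi>_def)
    then have "(5 + 2 * harm n)^CARD('m) \<le> \<Phi> r ^ CARD('m)"
      by (intro power_mono) (simp_all add: harm_nonneg add_nonneg_nonneg)
    with cb have cb2: "real (card (Q r)) * (r powr \<gamma> / m) \<le> \<Phi> r ^ CARD('m)" by (simp add: n_def)
    have rp: "r powr \<gamma> > 0" using r(1) by simp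
    have "real (card (Q r)) = (real (card (Q r)) * (r powr \<gamma> / m)) * (m / r powr \<gamma>)"
      using rp m by (simp add: field_simps)
    also have "\<dots> \<le> \<Phi> r ^ CARD('m) * (m / r powr \<gamma>)"
      using cb2 rp m by (intro mult_right_mono) auto
    also have "\<dots> = m * r powr (-\<gamma>) * \<Phi> r ^ CARD('m)" by (simp add: powr_minus_divide)
    finally show ?thesis .
  qed
  have bP: "bounded P" using Pbd by (rule bounded_box)
  have bcP: "bounded (closure P)" using bP by (rule bounded_closure)
  have ncP: "closure P \<noteq> {}" using Pne by simp
  define g where "g d = (ln m - \<gamma> * ln (d / a) + a * ln (7 + 2 * ln (2 * m * a / d + 5))) / (- ln d)" for d
  have ev: "eventually (\<lambda>d. ereal (ln (real (cover_num (closure P) d)) / - ln d) \<le> ereal (g d)) (at_right 0)"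
    unfolding eventually_at_right_field
  proof (intro exI[of _ "min 1 (a/m)"] conjI allI impI)
    show "(0::real) < min 1 (a/m)" using a m by simp
    fix d :: real assume d: "0 < d" "d < min 1 (a/m)"
    define r where "r = d / a"
    have r: "0 < r" "r < 1/m" using d a m by (auto simp: r_def field_simps)
    have dr: "real CARD('m) * r = d" using a by (simp add: r_def a_def)
    have cov: "real (cover_num (closure P) d) \<le> real (card (Q r))"
      using cover_closure_bound(1)[OF r(1) Pbd] dr by (simp add: Q_def)
    define H where "H = m * r powr (-\<gamma>) * \<Phi> r ^ CARD('m)"
    have Hpos: "H > 0" using m r \<Phi>pos[OF r(1)] by (simp add: H_def)
    have c1: "real (cover_num (closure P) d) \<ge> 1" using cover_num_pos[OF bcP d(1) ncP] by simp
    have cH: "real (cover_num (closure P) d) \<le> H" using cov keyQ[OF r] by (simp add: H_def)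
    have "ln (real (cover_num (closure P) d)) \<le> ln H" using c1 cH by (intro ln_mono) auto
    also have "ln H = ln m + ln (r powr (-\<gamma>)) + ln (\<Phi> r ^ CARD('m))"
      using m r \<Phi>pos[OF r(1)] by (simp add: H_def ln_mult)
    also have "\<dots> = ln m - \<gamma> * ln (d / a) + a * ln (7 + 2 * ln (2 * m * a / d + 5))"
    proof -
      have "ln (r powr (-\<gamma>)) = - \<gamma> * ln r" using r(1) by (simp add: ln_powr)
      moreover have "ln (\<Phi> r ^ CARD('m)) = a * ln (\<Phi> r)" using \<Phi>pos[OF r(1)] by (simp add: ln_realpow a_def)
      moreover have "\<Phi> r = 7 + 2 * ln (2 * m * a / d + 5)"
        unfolding \<Phi>_def r_def using a d(1) by (simp add: field_simps)
      ultimately show ?thesis by (simp add: r_def)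
    qed
    finally have num: "ln (real (cover_num (closure P) d)) \<le> ln m - \<gamma> * ln (d / a) + a * ln (7 + 2 * ln (2 * m * a / d + 5))" .
    have "- ln d > 0" using d by simp
    then have "ln (real (cover_num (closure P) d)) / - ln d \<le> g d"
      unfolding g_def using num by (intro divide_right_mono) auto
    then show "ereal (ln (real (cover_num (closure P) d)) / - ln d) \<le> ereal (g d)" by simp
  qed
  have "upper_box_dim (closure P) = Limsup (at_right 0) (\<lambda>d. ereal (ln (real (cover_num (closure P) d)) / - ln d))"
    using ncP bcP by (simp add: upper_box_dim_def)
  also have "\<dots> \<le> Limsup (at_right 0) (\<lambda>d. ereal (g d))" using ev by (rule Limsup_mono)
  also have "\<dots> = ereal \<gamma>"
  proof (rule lim_imp_Limsup)
    show "\<not> trivial_limit (at_right (0::real))" by simp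
    have "(g \<longlongrightarrow> \<gamma>) (at_right 0)" unfolding g_def using asym_lim[OF m a] .
    then show "((\<lambda>d. ereal (g d)) \<longlongrightarrow> ereal \<gamma>) (at_right 0)" by (rule tendsto_ereal)
  qed
  finally show ?thesis .
qed



lemma B_main:
  fixes \<mu> :: "(real^'m::finite) measure" and U :: "'m set"
  assumes Pr: "prob_space \<mu>" and S: "sets \<mu> = sets borel"
    and notAE: "\<not> (AE x in \<mu>. Liminf (at_right 0) (\<lambda>r. ennreal (r powr (-\<gamma>)) * Gfun U \<mu> x r) = 0)"
  shows "packing_dim_measure \<mu> \<le> ereal \<gamma>"
proof -
  interpret prob_space \<mu> by (rule Pr)
  define L where "L x = Liminf (at_right 0) (\<lambda>r. ennreal (r powr (-\<gamma>)) * Gfun U \<mu> x r)" for x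
  define Pm where "Pm m = {x::real^'m. (\<forall>i. \<bar>x$i\<bar> \<le> real (Suc m)) \<and>
      (\<forall>r. 0 < r \<and> r < 1 / real (Suc m) \<longrightarrow> ennreal (r powr \<gamma> / real (Suc m)) \<le> Gfun U \<mu> x r)}" for m
  have cover: "\<exists>m. x \<in> Pm m" if Lx: "L x \<noteq> 0" for x
  proof -
    have "0 < L x" using Lx by (simp add: zero_less_iff_neq_zero)
    then obtain y0 where y0: "0 < y0" "y0 < L x" using dense by blast
    define y where "y = min y0 1"
    have y1: "0 < y" unfolding y_def using y0(1) by simp
    have "y \<le> y0" unfolding y_def by (rule min.cobounded1)
    then have y2: "y < L x" using y0(2) by (rule le_less_trans)
    have y3: "y \<le> 1" unfolding y_def by (rule min.cobounded2)
    have ytop: "y < top" using y3 by (simp add: le_less_trans)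
    define t where "t = enn2real y"
    have yt: "y = ennreal t" unfolding t_def using ytop by simp
    have t: "t > 0" unfolding t_def using y1 ytop by (simp add: enn2real_positive_iff)
    have "eventually (\<lambda>r. y < ennreal (r powr (-\<gamma>)) * Gfun U \<mu> x r) (at_right 0)"
      using y2 unfolding L_def by (rule less_LiminfD)
    then obtain b where b: "b > 0" "\<And>r. r > 0 \<Longrightarrow> r < b \<Longrightarrow> y < ennreal (r powr (-\<gamma>)) * Gfun U \<mu> x r"
      unfolding eventually_at_right_field by auto
    obtain m :: nat where m: "real m \<ge> max (max (1/t) (1/b)) (norm x)" using real_arch_simple by blast
    have "x \<in> Pm m" unfolding Pm_def
    proof (intro CollectI conjI allI impI)
      fix i
      have "\<bar>x$i\<bar> \<le> norm x" by (rule component_le_norm_cart)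
      then show "\<bar>x$i\<bar> \<le> real (Suc m)" using m by simp
    next
      fix r :: real assume r: "0 < r \<and> r < 1 / real (Suc m)"
      have "1 / real (Suc m) \<le> b"
      proof -
        have "1 / b < real (Suc m)" using m by simp
        then show ?thesis using b(1) by (simp add: field_simps)
      qed
      then have rb: "r < b" using r by simp
      have "ennreal t < ennreal (r powr (-\<gamma>)) * Gfun U \<mu> x r" using b(2)[of r] r rb yt by simp
      then have "ennreal (r powr \<gamma>) * ennreal t \<le> ennreal (r powr \<gamma>) * (ennreal (r powr (-\<gamma>)) * Gfun U \<mu> x r)"
        by (intro mult_left_mono) auto
      also have "\<dots> = ennreal (r powr \<gamma> * r powr (-\<gamma>)) * Gfun U \<mu> x r"
        by (simp add: ennreal_mult mult.assoc)
      also have "r powr \<gamma> * r powr (-\<gamma>) = 1" using r by (simp add: powr_minus_divide)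
      finally have G0: "ennreal (r powr \<gamma>) * ennreal t \<le> Gfun U \<mu> x r" by simp
      have e: "ennreal (r powr \<gamma> * t) = ennreal (r powr \<gamma>) * ennreal t" using t by (intro ennreal_mult) auto
      have G: "ennreal (r powr \<gamma> * t) \<le> Gfun U \<mu> x r" unfolding e by (rule G0)
      have "1 / real (Suc m) \<le> t"
      proof -
        have "1 / t < real (Suc m)" using m by simp
        then show ?thesis using t by (simp add: field_simps)
      qed
      then have "r powr \<gamma> / real (Suc m) \<le> r powr \<gamma> * t"
        by (metis divide_inverse inverse_eq_divide mult_left_mono powr_ge_zero)
      then have "ennreal (r powr \<gamma> / real (Suc m)) \<le> ennreal (r powr \<gamma> * t)" by (rule ennreal_leI)
      then show "ennreal (r powr \<gamma> / real (Suc m)) \<le> Gfun U \<mu> x r" using G by (rule order_trans)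
    qed
    then show ?thesis by blast
  qed
  have clB: "closure (Pm m) \<in> sets \<mu>" for m using S by simp
  have "\<exists>m. closure (Pm m) \<notin> null_sets \<mu>"
  proof (rule ccontr)
    assume "\<not> (\<exists>m. closure (Pm m) \<notin> null_sets \<mu>)"
    then have N: "(\<Union>m. closure (Pm m)) \<in> null_sets \<mu>" by auto
    have "AE x in \<mu>. L x = 0"
    proof (rule AE_I'[OF N])
      show "{x \<in> space \<mu>. L x \<noteq> 0} \<subseteq> (\<Union>m. closure (Pm m))"
        using cover closure_subset by blast
    qed
    then show False using notAE unfolding L_def by simp
  qed
  then obtain m where m: "closure (Pm m) \<notin> null_sets \<mu>" by blast
  then have pos: "measure \<mu> (closure (Pm m)) > 0"
    using clB[of m] by (simp add: null_sets_def emeasure_eq_measure zero_less_measure_iff)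
  have ne: "Pm m \<noteq> {}" using m by auto
  have ubd: "upper_box_dim (closure (Pm m)) \<le> ereal \<gamma>"
  proof (rule B_box[OF Pr S _ ne])
    show "0 < real (Suc m)" by simp
    show "\<And>x i. x \<in> Pm m \<Longrightarrow> \<bar>x$i\<bar> \<le> real (Suc m)" by (simp add: Pm_def)
    show "\<And>x r. x \<in> Pm m \<Longrightarrow> 0 < r \<Longrightarrow> r < 1 / real (Suc m) \<Longrightarrow>
            ennreal (r powr \<gamma> / real (Suc m)) \<le> Gfun U \<mu> x r" by (simp add: Pm_def)
  qed
  have "packing_dim_measure \<mu> \<le> packing_dim (closure (Pm m))"
    unfolding packing_dim_measure_def using pos by (intro INF_lower) simp
  also have "\<dots> \<le> (SUP i::nat. upper_box_dim ((\<lambda>_. closure (Pm m)) i))"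
    unfolding packing_dim_def by (rule INF_lower) simp
  also have "\<dots> = upper_box_dim (closure (Pm m))" by simp
  also have "\<dots> \<le> ereal \<gamma>" by (rule ubd)
  finally show ?thesis .
qed

theorem theorem2p7:
  fixes \<mu> :: "(real^'m::finite) measure" and U :: "'m set"
  assumes "prob_space \<mu>" and "sets \<mu> = sets borel" and "U \<noteq> UNIV"
  shows "packing_dim_measure \<mu> =
    Sup (ereal ` {\<gamma>::real. AE x in \<mu>.
       Liminf (at_right 0) (\<lambda>r. ennreal (r powr (-\<gamma>)) * Gfun U \<mu> x r) = 0})"
    (is "?L = Sup (ereal ` ?S)")
proof (rule antisym)
  show "Sup (ereal ` ?S) \<le> ?L"
  proof (rule Sup_least)
    fix y assume "y \<in> ereal ` ?S"
    then obtain \<gamma> where "\<gamma> \<in> ?S" "y = ereal \<gamma>" by blast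
    then show "y \<le> ?L" using A_main[OF assms(1,2)] by simp
  qed
  show "?L \<le> Sup (ereal ` ?S)"
  proof (rule ccontr)
    assume "\<not> ?L \<le> Sup (ereal ` ?S)"
    then have "Sup (ereal ` ?S) < ?L" by (simp add: not_le)
    then obtain \<gamma> where g: "Sup (ereal ` ?S) < ereal \<gamma>" "ereal \<gamma> < ?L" using ereal_dense2 by blast
    have "\<gamma> \<notin> ?S"
    proof
      assume "\<gamma> \<in> ?S"
      then have "ereal \<gamma> \<le> Sup (ereal ` ?S)" by (intro Sup_upper) simp
      then show False using g(1) by simp
    qed
    then have "?L \<le> ereal \<gamma>" using B_main[OF assms(1,2)] by simp
    then show False using g(2) by simp
  qed
qed


end
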